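(* Let $(T,\to)$ be a countable tournament such that $\mathrm{Aut}(T,\to)$ is transitive on $T$ and transitive on the set of arcs $\{(x,y): x\to y\}$. Suppose that for each vertex $x$, the 3-cycle $C_3$ embeds in the subtournament induced on $x^+=\{y: x\to y\}$. Then $C_3$ embeds in the subtournament induced on $x^-=\{y:y\to x\}$ for each vertex $x$.
   Context: A tournament is a digraph in which for any distinct $x,y$ exactly one of $x\to y$, $y\to x$ holds. $C_3$ denotes the tournament on $\{a,b,c\}$ with $a\to b\to c\to a$. *)

theory Defs
  imports Main "HOL-Library.Countable_Set"
begin

definition tournament :: "'a set \<Rightarrow> ('a \<Rightarrow> 'a \<Rightarrow> bool) \<Rightarrow> bool" where
  "tournament V E \<longleftrightarrow>
     (\<forall>x\<in>V. \<not> E x x) \<and>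
     (\<forall>x\<in>V. \<forall>y\<in>V. x \<noteq> y \<longrightarrow> (E x y \<longleftrightarrow> \<not> E y x))"

definition automorphism :: "'a set \<Rightarrow> ('a \<Rightarrow> 'a \<Rightarrow> bool) \<Rightarrow> ('a \<Rightarrow> 'a) \<Rightarrow> bool" where
  "automorphism V E f \<longleftrightarrow> bij_betw f V V \<and> (\<forall>x\<in>V. \<forall>y\<in>V. E x y \<longleftrightarrow> E (f x) (f y))"

definition vertex_transitive :: "'a set \<Rightarrow> ('a \<Rightarrow> 'a \<Rightarrow> bool) \<Rightarrow> bool" where
  "vertex_transitive V E \<longleftrightarrow>
     (\<forall>x\<in>V. \<forall>y\<in>V. \<exists>f. automorphism V E f \<and> f x = y)"

definition arc_transitive :: "'a set \<Rightarrow> ('a \<Rightarrow> 'a \<Rightarrow> bool) \<Rightarrow> bool" where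
  "arc_transitive V E \<longleftrightarrow>
     (\<forall>x\<in>V. \<forall>y\<in>V. \<forall>u\<in>V. \<forall>v\<in>V. E x y \<longrightarrow> E u v \<longrightarrow>
        (\<exists>f. automorphism V E f \<and> f x = u \<and> f y = v))"

definition out_nbhd :: "'a set \<Rightarrow> ('a \<Rightarrow> 'a \<Rightarrow> bool) \<Rightarrow> 'a \<Rightarrow> 'a set" where
  "out_nbhd V E x = {y\<in>V. E x y}"

definition in_nbhd :: "'a set \<Rightarrow> ('a \<Rightarrow> 'a \<Rightarrow> bool) \<Rightarrow> 'a \<Rightarrow> 'a set" where
  "in_nbhd V E x = {y\<in>V. E y x}"

definition C3_arc :: "nat \<Rightarrow> nat \<Rightarrow> bool" where
  "C3_arc i j \<longleftrightarrow> (i = 0 \<and> j = 1) \<or> (i = 1 \<and> j = 2) \<or> (i = 2 \<and> j = 0)"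

definition embeds_C3 :: "('a \<Rightarrow> 'a \<Rightarrow> bool) \<Rightarrow> 'a set \<Rightarrow> bool" where
  "embeds_C3 E S \<longleftrightarrow> (\<exists>g. inj_on g {0::nat,1,2} \<and> g ` {0,1,2} \<subseteq> S \<and>
     (\<forall>i\<in>{0,1,2}. \<forall>j\<in>{0,1,2}. C3_arc i j \<longleftrightarrow> E (g i) (g j)))"

end

theory Submission
  imports Defs
begin

lemma cyc_embeds:
  assumes T: "tournament V E" and S: "S \<subseteq> V"
    and p: "p0 \<in> S" "p1 \<in> S" "p2 \<in> S"
    and e: "E p0 p1" "E p1 p2" "E p2 p0"
  shows "embeds_C3 E S"
proof -
  have V: "p0 \<in> V" "p1 \<in> V" "p2 \<in> V" using S p by auto
  have irr: "\<And>z. z \<in> V \<Longrightarrow> \<not> E z z" using T unfolding tournament_def by blast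
  have as: "\<And>u w. u \<in> V \<Longrightarrow> w \<in> V \<Longrightarrow> u \<noteq> w \<Longrightarrow> E u w \<Longrightarrow> \<not> E w u"
    using T unfolding tournament_def by blast
  have d: "p0 \<noteq> p1" "p1 \<noteq> p2" "p2 \<noteq> p0" using irr V e by metis+
  have n: "\<not> E p1 p0" "\<not> E p2 p1" "\<not> E p0 p2" using as V d e by metis+
  have nn: "\<not> E p0 p0" "\<not> E p1 p1" "\<not> E p2 p2" using irr V by auto
  define g where "g = (\<lambda>i::nat. if i = 0 then p0 else if i = 1 then p1 else p2)"
  have "inj_on g {0::nat,1,2}" using d unfolding g_def inj_on_def by auto
  moreover have "g ` {0,1,2} \<subseteq> S" using p unfolding g_def by auto
  moreover have "\<forall>i\<in>{0,1,2}. \<forall>j\<in>{0,1,2}. C3_arc i j \<longleftrightarrow> E (g i) (g j)"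
    using e n nn unfolding g_def C3_arc_def by auto
  ultimately show ?thesis unfolding embeds_C3_def by blast
qed

lemma embeds_get:
  assumes "embeds_C3 E S"
  shows "\<exists>a b c. a \<in> S \<and> b \<in> S \<and> c \<in> S \<and> E a b \<and> E b c \<and> E c a"
proof -
  obtain g where g: "g ` {0::nat,1,2} \<subseteq> S"
    "\<forall>i\<in>{0,1,2}. \<forall>j\<in>{0,1,2}. C3_arc i j \<longleftrightarrow> E (g i) (g j)"
    using assms unfolding embeds_C3_def by blast
  have "E (g 0) (g 1)" "E (g 1) (g 2)" "E (g 2) (g 0)" using g(2) unfolding C3_arc_def by auto
  moreover have "g 0 \<in> S" "g 1 \<in> S" "g 2 \<in> S" using g(1) by auto
  ultimately show ?thesis by blast
qed

theorem lemma3p4: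
  fixes V :: "'a set" and E :: "'a \<Rightarrow> 'a \<Rightarrow> bool"
  assumes "countable V"
    and "tournament V E"
    and "vertex_transitive V E"
    and "arc_transitive V E"
    and "\<forall>x\<in>V. embeds_C3 E (out_nbhd V E x)"
  shows "\<forall>x\<in>V. embeds_C3 E (in_nbhd V E x)"
proof
  fix z assume zV: "z \<in> V"
  note T = assms(2)
  have tot: "\<And>u w. u \<in> V \<Longrightarrow> w \<in> V \<Longrightarrow> u \<noteq> w \<Longrightarrow> \<not> E u w \<Longrightarrow> E w u"
    using T unfolding tournament_def by blast
  have as: "\<And>u w. u \<in> V \<Longrightarrow> w \<in> V \<Longrightarrow> E u w \<Longrightarrow> \<not> E w u"
    using T unfolding tournament_def by metis
  have sub: "in_nbhd V E y \<subseteq> V" for y unfolding in_nbhd_def by auto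
  obtain a b c where abc: "a \<in> out_nbhd V E z" "b \<in> out_nbhd V E z" "c \<in> out_nbhd V E z"
    "E a b" "E b c" "E c a"
    using embeds_get assms(5) zV by blast
  have V: "a \<in> V" "b \<in> V" "c \<in> V" and xe: "E z a" "E z b" "E z c"
    using abc unfolding out_nbhd_def by auto
  obtain f where f: "automorphism V E f" "f z = b" "f a = c"
    using assms(4) zV V xe abc unfolding arc_transitive_def by blast
  have fV: "\<And>u. u \<in> V \<Longrightarrow> f u \<in> V" and fE: "\<And>u w. u \<in> V \<Longrightarrow> w \<in> V \<Longrightarrow> E u w \<longleftrightarrow> E (f u) (f w)"
    using f(1) unfolding automorphism_def bij_betw_def by auto
  define p where "p = f b"
  define q where "q = f c"
  have pq: "p \<in> V" "q \<in> V" "E b p" "E c p" "E b q" "E q c" "E p q"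
    unfolding p_def q_def using fV fE V zV xe abc f by metis+
  have ex: "\<exists>y\<in>V. embeds_C3 E (in_nbhd V E y)"
  proof (cases "E a p")
    case True
    have "embeds_C3 E (in_nbhd V E p)"
      using cyc_embeds[OF T sub[of p], of a b c] True pq V abc by (auto simp: in_nbhd_def)
    then show ?thesis using pq by blast
  next
    case False
    have ap: "a \<noteq> p" using as V pq abc by metis
    have pa: "E p a" using tot[OF V(1) pq(1) ap False] .
    show ?thesis
    proof (cases "E q a")
      case True
      have "embeds_C3 E (in_nbhd V E a)"
        using cyc_embeds[OF T sub[of a], of q c p] True pa pq V abc by (auto simp: in_nbhd_def)
      then show ?thesis using V by blast
    next
      case False
      have aq: "a \<noteq> q" using as V pq abc by metis
      have "E a q" using tot[OF pq(2) V(1)] aq False by metis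
      then have "embeds_C3 E (in_nbhd V E q)"
        using cyc_embeds[OF T sub[of q], of a b p] pa pq V abc by (auto simp: in_nbhd_def)
      then show ?thesis using pq by blast
    qed
  qed
  then obtain y where yV: "y \<in> V" and ey: "embeds_C3 E (in_nbhd V E y)" by blast
  obtain h where h: "automorphism V E h" "h y = z"
    using assms(3) yV zV unfolding vertex_transitive_def by blast
  have hV: "\<And>u. u \<in> V \<Longrightarrow> h u \<in> V" and hE: "\<And>u w. u \<in> V \<Longrightarrow> w \<in> V \<Longrightarrow> E u w \<longleftrightarrow> E (h u) (h w)"
    using h(1) unfolding automorphism_def bij_betw_def by auto
  obtain r s t where rst: "r \<in> in_nbhd V E y" "s \<in> in_nbhd V E y" "t \<in> in_nbhd V E y"
    "E r s" "E s t" "E t r"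
    using embeds_get[OF ey] by blast
  have rV: "r \<in> V" "s \<in> V" "t \<in> V" "E r y" "E s y" "E t y" using rst unfolding in_nbhd_def by auto
  show "embeds_C3 E (in_nbhd V E z)"
    using cyc_embeds[OF T sub[of z], of "h r" "h s" "h t"] rV rst hV hE yV h(2) zV by (auto simp: in_nbhd_def)
qed

end
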